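(* There are constants $C_0,r>0$ such that for $k>\sqrt n$ the following holds with probability at least $1-e^{-n^r}$ over $G'\sim G(n,\tfrac12)$: for every set $K$ of $k$ vertices, if $G$ is obtained from $G'$ by adding all missing edges inside $K$, then every maximum clique $K'$ of $G$ satisfies $|K'\cap K|\ge k-C_0\log n$ and $|K'\setminus K|\le C_0\log n$.
   Context: $G(n,p)$ denotes the Erdős–Rényi random graph on $n$ vertices with edge probability $p$. Logarithms are base $2$. (This is the statement that, for $G\sim AG(n,\tfrac12,k)$ with $k>\sqrt n$, with extremely high probability—probability of the form $1-e^{-n^r}$—simultaneously for all adversarial choices, the maximum clique contains all but $O(\log n)$ vertices of the planted clique and at most $O(\log n)$ other vertices.) *)

theory Defs
  imports "HOL-Probability.Probability"
begin

text \<open>Simple graphs on vertex set {0..<n}, given by their edge sets (2-element sets).\<close>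

definition all_edges :: "nat \<Rightarrow> nat set set" where
  "all_edges n = {{u, v} | u v. u < n \<and> v < n \<and> u \<noteq> v}"

definition gnp_half :: "nat \<Rightarrow> nat set set pmf" where
  "gnp_half n = pmf_of_set (Pow (all_edges n))"

definition clique_edges :: "nat set \<Rightarrow> nat set set" where
  "clique_edges K = {{u, v} | u v. u \<in> K \<and> v \<in> K \<and> u \<noteq> v}"

definition is_clique :: "nat set set \<Rightarrow> nat set \<Rightarrow> bool" where
  "is_clique E S \<longleftrightarrow> (\<forall>u\<in>S. \<forall>v\<in>S. u \<noteq> v \<longrightarrow> {u, v} \<in> E)"

definition is_max_clique :: "nat \<Rightarrow> nat set set \<Rightarrow> nat set \<Rightarrow> bool" where
  "is_max_clique n E S \<longleftrightarrow> S \<subseteq> {..<n} \<and> is_clique E S \<and>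
     (\<forall>T. T \<subseteq> {..<n} \<longrightarrow> is_clique E T \<longrightarrow> card T \<le> card S)"

end

theory Submission
  imports Defs "HOL-Real_Asymp.Real_Asymp"
begin

lemma ln2_half: "(1/2::real) \<le> ln 2"
proof -
  have "exp (1/2::real) \<le> 2" using exp_half_le2 by auto
  hence "ln (exp (1/2::real)) \<le> ln 2" by (subst ln_le_cancel_iff) auto
  thus ?thesis by simp
qed

lemma real_part:
  fixes x L m a q :: real
  assumes L: "L > 0" and m: "m \<ge> 3 * L" "m \<le> 3*L+1" and a: "a \<ge> sqrt x - 3*L - 2" "a \<ge> 0"
    and Q2: "(3 * L + 1) * L - 2 * L * (sqrt x - 3 * L - 2) + 2 * q \<le> 0"
  shows "(m+a)*L - a*m \<le> -2*q"
proof -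
  have "a*m \<ge> a*(3*L)" using a m by (intro mult_left_mono) auto
  moreover have "m*L \<le> (3*L+1)*L" using m L by (intro mult_right_mono) auto
  moreover have "2*L*a \<ge> 2*L*(sqrt x - 3 * L - 2)" using a L by (intro mult_left_mono) auto
  ultimately show ?thesis using Q2 by (simp add: algebra_simps)
qed

lemma clique_K:
  assumes "K \<subseteq> {..<n}" "is_max_clique n (E \<union> clique_edges K) K'"
  shows "card K \<le> card K'"
proof -
  have "is_clique (E \<union> clique_edges K) K"
    unfolding is_clique_def clique_edges_def by blast
  thus ?thesis using assms unfolding is_max_clique_def by blast
qed

lemma cross_in_E:
  assumes "is_max_clique n (E \<union> clique_edges K) K'" "u \<in> K' - K" "v \<in> K'" "u \<noteq> v"
  shows "{u,v} \<in> E"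
proof -
  have "{u,v} \<in> E \<union> clique_edges K" using assms unfolding is_max_clique_def is_clique_def by blast
  moreover have "{u,v} \<notin> clique_edges K"
  proof
    assume "{u,v} \<in> clique_edges K"
    then obtain x y where "x \<in> K" "y \<in> K" "{u,v} = {x,y}" unfolding clique_edges_def by blast
    hence "u \<in> K" by (auto simp: doubleton_eq_iff)
    thus False using assms by blast
  qed
  ultimately show ?thesis by blast
qed

lemma bad_pair:
  assumes max: "is_max_clique n (E \<union> clique_edges K) K'" and K: "K \<subseteq> {..<n}" "card K = k"
    and m: "m \<le> card (K' - K)" and am: "a + m \<le> k"
  shows "\<exists>B C. B \<subseteq> {..<n} \<and> C \<subseteq> {..<n} \<and> card B = m \<and> card C = a \<and> B \<inter> C = {}
           \<and> (\<forall>u\<in>B. \<forall>v\<in>C. {u,v} \<in> E)"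
proof -
  have K'n: "K' \<subseteq> {..<n}" using max unfolding is_max_clique_def by blast
  hence fin: "finite K'" using finite_subset by blast
  obtain B where B: "B \<subseteq> K' - K" "card B = m" using obtain_subset_with_card_n[OF m] by blast
  have "finite B" using B fin finite_subset by blast
  have "B \<subseteq> K'" using B by blast
  have "card (K' - B) = card K' - m" using B \<open>finite B\<close> \<open>B \<subseteq> K'\<close> by (simp add: card_Diff_subset)
  moreover have "card K' \<ge> k" using clique_K[OF K(1) max] K by simp
  ultimately have "a \<le> card (K' - B)" using am by linarith
  then obtain C where C: "C \<subseteq> K' - B" "card C = a" using obtain_subset_with_card_n by blast
  have "\<forall>u\<in>B. \<forall>v\<in>C. {u,v} \<in> E"
  proof (intro ballI)
    fix u v assume "u \<in> B" "v \<in> C"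
    thus "{u,v} \<in> E" using cross_in_E[OF max, of u v] B C by blast
  qed
  thus ?thesis using B C K'n by (intro exI[of _ B] exI[of _ C]) auto
qed

lemma ev_card:
  assumes "finite U" "F \<subseteq> U"
  shows "card {E \<in> Pow U. F \<subseteq> E} = 2 ^ (card U - card F)"
proof -
  have eq: "{E \<in> Pow U. F \<subseteq> E} = (\<lambda>X. X \<union> F) ` Pow (U - F)" using assms(2)
  proof (safe)
    fix E assume "E \<subseteq> U" "F \<subseteq> E"
    thus "E \<in> (\<lambda>X. X \<union> F) ` Pow (U - F)" by (intro image_eqI[of _ _ "E - F"]) auto
  qed auto
  have "inj_on (\<lambda>X. X \<union> F) (Pow (U - F))" by (auto simp: inj_on_def)
  hence "card ((\<lambda>X. X \<union> F) ` Pow (U - F)) = card (Pow (U - F))" by (rule card_image)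
  hence "card {E \<in> Pow U. F \<subseteq> E} = card (Pow (U - F))" by (subst eq)
  also have "\<dots> = 2 ^ (card U - card F)" using assms
    by (simp add: card_Pow card_Diff_subset finite_subset)
  finally show ?thesis .
qed

lemma cross_card:
  assumes "B \<inter> C = {}" "finite B" "finite C"
  shows "card {{u,v} | u v. u \<in> B \<and> v \<in> C} = card B * card C"
proof -
  have eq: "{{u,v} | u v. u \<in> B \<and> v \<in> C} = (\<lambda>(u,v). {u,v}) ` (B \<times> C)" by auto
  have "inj_on (\<lambda>(u,v). {u,v}) (B \<times> C)"
    using assms(1) by (auto simp: inj_on_def doubleton_eq_iff)
  thus ?thesis by (simp add: eq card_image card_cartesian_product)
qed

lemma choose_le: "n choose m \<le> n ^ m"
  by (cases "m \<le> n") (auto simp: binomial_le_pow binomial_eq_0)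

lemma prob_bound:
  "measure_pmf.prob (gnp_half n)
     {E. \<not> (\<exists>B C. B \<subseteq> {..<n} \<and> C \<subseteq> {..<n} \<and> card B = m \<and> card C = a \<and> B \<inter> C = {}
           \<and> (\<forall>u\<in>B. \<forall>v\<in>C. {u,v} \<in> E))}
   \<ge> 1 - real n ^ (m+a) / 2 ^ (a*m)"
proof -
  define U where "U = all_edges n"
  define I where "I = {(B,C). B \<subseteq> {..<n} \<and> C \<subseteq> {..<n} \<and> card B = m \<and> card C = a \<and> B \<inter> C = {}}"
  define F where "F = (\<lambda>(B::nat set,C::nat set). {{u,v} | u v. u \<in> B \<and> v \<in> C})"
  define S where "S = Pow U"
  define Ev where "Ev = (\<lambda>i. {E \<in> S. F i \<subseteq> E})"
  define Good where "Good = {E. \<not> (\<exists>B C. B \<subseteq> {..<n} \<and> C \<subseteq> {..<n} \<and> card B = m \<and> card C = a \<and> B \<inter> C = {}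
           \<and> (\<forall>u\<in>B. \<forall>v\<in>C. {u,v} \<in> E))}"
  have finU: "finite U" unfolding U_def all_edges_def
    by (rule finite_subset[of _ "Pow {..<n}"]) auto
  have finS: "finite S" "S \<noteq> {}" using finU unfolding S_def by auto
  have cardS: "card S = 2 ^ card U" unfolding S_def using finU by (simp add: card_Pow)
  have SG: "S \<inter> Good = S - (\<Union>i\<in>I. Ev i)"
    unfolding Good_def I_def Ev_def F_def by blast
  have finI: "finite I"
    by (rule finite_subset[of _ "Pow {..<n} \<times> Pow {..<n}"]) (auto simp: I_def)
  have Fsub: "F i \<subseteq> U" and cardF: "card (F i) = a * m" if "i \<in> I" for i
  proof -
    obtain B C where i0: "i = (B,C)" by (cases i)
    have i: "i = (B,C)" "B \<subseteq> {..<n}" "C \<subseteq> {..<n}" "card B = m" "card C = a" "B \<inter> C = {}"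
      using that i0 unfolding I_def by auto
    show "F i \<subseteq> U" using i unfolding F_def U_def all_edges_def by blast
    have "finite B" "finite C" using i(2,3) finite_lessThan finite_subset by blast+
    thus "card (F i) = a * m" using i cross_card[of B C] unfolding F_def by simp
  qed
  have cardEv: "real (card (Ev i)) = 2 ^ card U / 2 ^ (a*m)" if "i \<in> I" for i
  proof -
    have "card (Ev i) = 2 ^ (card U - a*m)" unfolding Ev_def S_def
      using ev_card[OF finU Fsub[OF that]] cardF[OF that] by simp
    moreover have "a*m \<le> card U" using card_mono[OF finU Fsub[OF that]] cardF[OF that] by simp
    ultimately have "real (card (Ev i)) = (2::real) ^ (card U - a*m)" by simp
    also have "\<dots> = 2 ^ card U / 2 ^ (a*m)" by (rule power_diff) (use \<open>a*m \<le> card U\<close> in auto)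
    finally show ?thesis .
  qed
  have cardI: "card I \<le> n ^ (m + a)"
  proof -
    have "I \<subseteq> {B. B \<subseteq> {..<n} \<and> card B = m} \<times> {C. C \<subseteq> {..<n} \<and> card C = a}"
      unfolding I_def by auto
    hence "card I \<le> card ({B. B \<subseteq> {..<n} \<and> card B = m} \<times> {C. C \<subseteq> {..<n} \<and> card C = a})"
      by (intro card_mono) auto
    also have "\<dots> = (n choose m) * (n choose a)"
      by (simp add: card_cartesian_product n_subsets)
    also have "\<dots> \<le> n ^ m * n ^ a" by (intro mult_le_mono choose_le)
    finally show ?thesis by (simp add: power_add)
  qed
  have "card (\<Union>i\<in>I. Ev i) \<le> (\<Sum>i\<in>I. card (Ev i))" by (rule card_UN_le[OF finI])
  hence "real (card (\<Union>i\<in>I. Ev i)) \<le> (\<Sum>i\<in>I. real (card (Ev i)))" by (metis of_nat_le_iff of_nat_sum)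
  also have "\<dots> = real (card I) * (2 ^ card U / 2 ^ (a*m))" using cardEv by simp
  also have "\<dots> \<le> real n ^ (m+a) * (2 ^ card U / 2 ^ (a*m))"
  proof (intro mult_right_mono)
    show "real (card I) \<le> real n ^ (m+a)" using cardI by (metis of_nat_le_iff of_nat_power)
  qed simp
  finally have bnd: "real (card (\<Union>i\<in>I. Ev i)) \<le> real n ^ (m+a) * (2 ^ card U / 2 ^ (a*m))" .
  have finX: "finite (\<Union>i\<in>I. Ev i)" using finS(1) by (rule finite_subset[rotated]) (auto simp: Ev_def)
  have "card S - card (\<Union>i\<in>I. Ev i) \<le> card (S - (\<Union>i\<in>I. Ev i))" by (rule diff_card_le_card_Diff[OF finX])
  hence "real (card S - card (\<Union>i\<in>I. Ev i)) \<le> real (card (S \<inter> Good))" unfolding SG by (rule of_nat_mono)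
  moreover have "real (card S) - real (card (\<Union>i\<in>I. Ev i)) \<le> real (card S - card (\<Union>i\<in>I. Ev i))"
    by (cases "card (\<Union>i\<in>I. Ev i) \<le> card S") (auto simp: of_nat_diff)
  ultimately have "real (card (S \<inter> Good)) \<ge> real (card S) - real (card (\<Union>i\<in>I. Ev i))" by linarith
  moreover have "measure_pmf.prob (gnp_half n) Good = real (card (S \<inter> Good)) / real (card S)"
    unfolding gnp_half_def U_def[symmetric] S_def[symmetric] by (rule measure_pmf_of_set[OF finS(2,1)])
  ultimately have "measure_pmf.prob (gnp_half n) Good \<ge> (real (card S) - real (card (\<Union>i\<in>I. Ev i))) / real (card S)"
    by (simp add: divide_right_mono)
  moreover have "(real (card S) - real (card (\<Union>i\<in>I. Ev i))) / real (card S) \<ge> 1 - real n ^ (m+a) / 2 ^ (a*m)"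
  proof -
    have "(real (card S) - real (card (\<Union>i\<in>I. Ev i))) / real (card S)
        = 1 - real (card (\<Union>i\<in>I. Ev i)) / 2 ^ card U" using cardS by (simp add: diff_divide_distrib)
    also have "\<dots> \<ge> 1 - real n ^ (m+a) * (2 ^ card U / 2 ^ (a*m)) / 2 ^ card U"
      using bnd by (intro diff_left_mono divide_right_mono) auto
    finally show ?thesis by simp
  qed
  ultimately show ?thesis unfolding Good_def by linarith
qed

theorem proposition2p1:
  "\<exists>C0 r :: real. C0 > 0 \<and> r > 0 \<and>
    (\<forall>n k :: nat. real k > sqrt (real n) \<longrightarrow>
      measure_pmf.prob (gnp_half n)
        {E. \<forall>K. K \<subseteq> {..<n} \<and> card K = k \<longrightarrow>
              (\<forall>K'. is_max_clique n (E \<union> clique_edges K) K' \<longrightarrow>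
                  real (card (K' \<inter> K)) \<ge> real k - C0 * log 2 (real n) \<and>
                  real (card (K' - K)) \<le> C0 * log 2 (real n))}
      \<ge> 1 - exp (- (real n powr r)))"
proof -
  have ev1: "eventually (\<lambda>x::real. 3 * log 2 x + 3 \<le> sqrt x - 1) at_top" by real_asymp
  have ev2: "eventually (\<lambda>x::real. (3 * log 2 x + 1) * log 2 x - 2 * log 2 x * (sqrt x - 3 * log 2 x - 2)
      + 2 * x powr (1/4) \<le> 0) at_top" by real_asymp
  obtain X where X: "\<And>x. x \<ge> X \<Longrightarrow> 3 * log 2 x + 3 \<le> sqrt x - 1 \<and>
     (3 * log 2 x + 1) * log 2 x - 2 * log 2 x * (sqrt x - 3 * log 2 x - 2) + 2 * x powr (1/4) \<le> 0"
    using eventually_conj[OF ev1 ev2] unfolding eventually_at_top_linorder by blast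
  define N0 :: nat where "N0 = max 2 (nat (ceiling X))"
  define C0 :: real where "C0 = max 3 (real N0)"
  show ?thesis
  proof (rule exI[of _ C0], rule exI[of _ "1/4::real"], intro conjI allI impI)
    show "C0 > 0" unfolding C0_def by simp
    show "(0::real) < 1/4" by simp
    fix n k :: nat assume k: "real k > sqrt (real n)"
    define L where "L = log 2 (real n)"
    define Ev where "Ev = {E. \<forall>K. K \<subseteq> {..<n} \<and> card K = k \<longrightarrow>
              (\<forall>K'. is_max_clique n (E \<union> clique_edges K) K' \<longrightarrow>
                  real (card (K' \<inter> K)) \<ge> real k - C0 * L \<and>
                  real (card (K' - K)) \<le> C0 * L)}"
    have kn: "card K = k \<Longrightarrow> K \<subseteq> {..<n} \<Longrightarrow> k \<le> n" for K :: "nat set"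
      using card_mono[of "{..<n}" K] by auto
    have main: "measure_pmf.prob (gnp_half n) Ev \<ge> 1 - exp (- (real n powr (1/4)))"
    proof (cases "n < N0")
      case True
      have "Ev = UNIV"
      proof (cases "n \<le> 1")
        case True
        have "sqrt (real n) \<ge> real n" using True
          by (cases "n = 0") (auto simp: le_Suc_eq)
        hence "\<not> (K \<subseteq> {..<n} \<and> card K = k)" for K using kn[of K] k by force
        thus ?thesis unfolding Ev_def by blast
      next
        case False
        hence "L \<ge> 1" unfolding L_def by simp
        moreover have "C0 \<ge> real N0" unfolding C0_def by simp
        ultimately have "C0 * L \<ge> real N0"
          by (metis mult_le_cancel_left1 order_trans dual_order.trans less_eq_real_def mult_right_mono mult.commute of_nat_0_le_iff)
        hence big: "C0 * L \<ge> real n" using \<open>n < N0\<close> by linarith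
        have "real (card (K' \<inter> K)) \<ge> real k - C0 * L \<and> real (card (K' - K)) \<le> C0 * L"
          if "K \<subseteq> {..<n}" "card K = k" "is_max_clique n (E \<union> clique_edges K) K'" for E K K'
        proof -
          have "K' \<subseteq> {..<n}" using that unfolding is_max_clique_def by blast
          hence "card (K' - K) \<le> n" using card_mono[of "{..<n}" "K' - K"] by auto
          thus ?thesis using kn[of K] that big by auto
        qed
        thus ?thesis unfolding Ev_def by blast
      qed
      thus ?thesis by simp
    next
      case False
      hence n2: "n \<ge> 2" and nX: "real n \<ge> X" unfolding N0_def by (auto, linarith)
      have Q: "3 * L + 3 \<le> sqrt n - 1"
        "(3 * L + 1) * L - 2 * L * (sqrt n - 3 * L - 2) + 2 * real n powr (1/4) \<le> 0"
        using X[OF nX] unfolding L_def by auto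
      have L1: "L \<ge> 1" unfolding L_def using n2 by simp
      define m where "m = nat (ceiling (3 * L))"
      define s where "s = nat (floor (sqrt (real n)))"
      define a where "a = s - m"
      have mr: "real m = of_int (ceiling (3 * L))" unfolding m_def using L1 by simp
      have m1: "real m \<ge> 3 * L" "real m \<le> 3 * L + 1" unfolding mr using ceiling_correct[of "3*L"] by linarith+
      have sr: "real s = of_int (floor (sqrt (real n)))" unfolding s_def by simp
      have s1: "real s \<le> sqrt n" "real s \<ge> sqrt n - 1" unfolding sr using floor_correct[of "sqrt (real n)"] by linarith+
      have ms: "m \<le> s" using m1 s1 Q by linarith
      have a1: "real a = real s - real m" unfolding a_def using ms by simp
      have ask: "a + m \<le> k" using ms k s1 unfolding a_def by linarith
      have sub: "{E. \<not> (\<exists>B C. B \<subseteq> {..<n} \<and> C \<subseteq> {..<n} \<and> card B = m \<and> card C = a \<and> B \<inter> C = {}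
           \<and> (\<forall>u\<in>B. \<forall>v\<in>C. {u,v} \<in> E))} \<subseteq> Ev"
      proof
        fix E
        assume "E \<in> {E. \<not> (\<exists>B C. B \<subseteq> {..<n} \<and> C \<subseteq> {..<n} \<and> card B = m \<and> card C = a \<and> B \<inter> C = {}
           \<and> (\<forall>u\<in>B. \<forall>v\<in>C. {u,v} \<in> E))}"
        hence nob: "\<not> (\<exists>B C. B \<subseteq> {..<n} \<and> C \<subseteq> {..<n} \<and> card B = m \<and> card C = a \<and> B \<inter> C = {}
           \<and> (\<forall>u\<in>B. \<forall>v\<in>C. {u,v} \<in> E))" by blast
        have "real (card (K' \<inter> K)) \<ge> real k - C0 * L \<and> real (card (K' - K)) \<le> C0 * L"
          if K: "K \<subseteq> {..<n}" "card K = k" and max: "is_max_clique n (E \<union> clique_edges K) K'" for K K'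
        proof -
          have "K' \<subseteq> {..<n}" using max unfolding is_max_clique_def by blast
          hence finK': "finite K'" using finite_subset by blast
          have ck: "card K' \<ge> k" using clique_K[OF K(1) max] K by simp
          have split: "card K' = card (K' \<inter> K) + card (K' - K)" using finK'
            by (metis card_Int_Diff)
          have notm: "\<not> m \<le> card (K' - K)" using bad_pair[OF max K _ ask] nob by blast
          hence "real (card (K' - K)) < 3 * L" using m1 unfolding m_def by linarith
          moreover have "3 * L \<le> C0 * L" unfolding C0_def using L1 by (intro mult_right_mono) auto
          ultimately show ?thesis using split ck by linarith
        qed
        thus "E \<in> Ev" unfolding Ev_def by blast
      qed
      have "measure_pmf.prob (gnp_half n) Ev \<ge> 1 - real n ^ (m+a) / 2 ^ (a*m)"
        by (rule order_trans[OF prob_bound[of n m a] measure_pmf.finite_measure_mono[OF sub]]) simp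
      moreover have "real n ^ (m+a) / 2 ^ (a*m) \<le> exp (- (real n powr (1/4)))"
      proof -
        have key: "(real m + real a) * L - real a * real m \<le> - 2 * real n powr (1/4)"
        proof -
          have "L > 0" using L1 by simp
          moreover have "real a \<ge> sqrt (real n) - 3 * L - 2" using a1 s1 m1 by linarith
          ultimately have "(real m + real a) * L - real a * real m \<le> -2 * real n powr (1/4)"
            using real_part[OF _ m1, of "real n" "real a" "real n powr (1/4)"] Q(2) by simp
          thus ?thesis by simp
        qed
        have lnn: "ln (real n) = L * ln 2" unfolding L_def log_def by simp
        have "ln (real n ^ (m+a)) = (real m + real a) * L * ln 2" using n2
          by (simp add: ln_realpow lnn)
        also have "\<dots> \<le> (real a * real m - 2 * real n powr (1/4)) * ln 2"
          using key by (intro mult_right_mono) auto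
        also have "\<dots> \<le> real a * real m * ln 2 - real n powr (1/4)"
        proof -
          have "real n powr (1/4) * 1 \<le> real n powr (1/4) * (2 * ln 2)"
            using ln2_half by (intro mult_left_mono) auto
          thus ?thesis by (simp add: algebra_simps)
        qed
        also have "\<dots> = ln (exp (- (real n powr (1/4))) * 2 ^ (a*m))"
          by (simp add: ln_mult ln_realpow)
        finally have "real n ^ (m+a) \<le> exp (- (real n powr (1/4))) * 2 ^ (a*m)"
          using n2 by (subst (asm) ln_le_cancel_iff) auto
        thus ?thesis by (simp add: divide_le_eq)
      qed
      ultimately show ?thesis by linarith
    qed
    thus "measure_pmf.prob (gnp_half n) {E. \<forall>K. K \<subseteq> {..<n} \<and> card K = k \<longrightarrow>
              (\<forall>K'. is_max_clique n (E \<union> clique_edges K) K' \<longrightarrow>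
                  real (card (K' \<inter> K)) \<ge> real k - C0 * log 2 (real n) \<and>
                  real (card (K' - K)) \<le> C0 * log 2 (real n))}
      \<ge> 1 - exp (- (real n powr (1/4)))" unfolding Ev_def L_def .
  qed
qed

end
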